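(* For $t\in(0,1)$ and $n\ge1$, $$(t-\alpha_n)(r_{n+1}-r_n)=\beta_{n+1}R_{n+1}-\beta_nR_{n-1},$$ $$(1-\alpha_n)(y_n-y_{n+1})=\beta_nx_{n-1}-\beta_{n+1}x_{n+1},$$ $$-\alpha_n(y_{n+1}-y_n+r_n-r_{n+1}-1)=\beta_{n+1}x_{n+1}-\beta_nx_{n-1}+\beta_nR_{n-1}-\beta_{n+1}R_{n+1}.$$
   Context: Fix $\alpha>0$, $\beta>0$, and real $A,B$ with $A\ge0$, $A+B\ge0$, not both zero; $\theta$ is the Heaviside step function. For $t\in(0,1)$ let $w(x;t)=x^\alpha(1-x)^\beta(A+B\theta(x-t))$ on $[0,1]$, and let $P_n(x)=P_n(x;t)=x^n+\mathsf p_1(n,t)x^{n-1}+\cdots$ be the monic orthogonal polynomials: $\int_0^1P_iP_jw\,dx=h_i(t)\delta_{ij}$, $h_i>0$, satisfying $xP_n=P_{n+1}+\alpha_nP_n+\beta_nP_{n-1}$, $P_{-1}=0$, $\beta_n=h_n/h_{n-1}$, $\mathsf p_1(0,t)=0$. Define $R_n(t)=B\,t^\alpha(1-t)^\beta P_n(t;t)^2/h_n$, $r_n(t)=B\,t^\alpha(1-t)^\beta P_n(t;t)P_{n-1}(t;t)/h_{n-1}$ ($r_0=0$), $x_n(t)=\frac{\beta}{h_n}\int_0^1\frac{P_n(y)^2}{1-y}\,y^\alpha(1-y)^\beta(A+B\theta(y-t))\,dy$, $y_n(t)=\frac{\beta}{h_{n-1}}\int_0^1\frac{P_n(y)P_{n-1}(y)}{1-y}\,y^\alpha(1-y)^\beta(A+B\theta(y-t))\,dy$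 ($y_0=0$). *)

theory Defs
  imports "HOL-Analysis.Analysis" "HOL-Computational_Algebra.Polynomial"
begin

definition heaviside :: "real \<Rightarrow> real" where
  "heaviside s = (if s \<ge> 0 then 1 else 0)"

definition wt :: "real \<Rightarrow> real \<Rightarrow> real \<Rightarrow> real \<Rightarrow> real \<Rightarrow> real \<Rightarrow> real" where
  "wt al be A B t x = x powr al * (1 - x) powr be * (A + B * heaviside (x - t))"

definition ip :: "real \<Rightarrow> real \<Rightarrow> real \<Rightarrow> real \<Rightarrow> real \<Rightarrow> real poly \<Rightarrow> real poly \<Rightarrow> real" where
  "ip al be A B t p q = (LINT x:{0..1}|lborel. poly p x * poly q x * wt al be A B t x)"

definition is_mop :: "real \<Rightarrow> real \<Rightarrow> real \<Rightarrow> real \<Rightarrow> real \<Rightarrow> nat \<Rightarrow> real poly \<Rightarrow> bool" where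
  "is_mop al be A B t n p \<longleftrightarrow> degree p = n \<and> lead_coeff p = 1 \<and>
     (\<forall>q. degree q < n \<longrightarrow> ip al be A B t p q = 0)"

definition OP :: "real \<Rightarrow> real \<Rightarrow> real \<Rightarrow> real \<Rightarrow> real \<Rightarrow> nat \<Rightarrow> real poly" where
  "OP al be A B t n = (THE p. is_mop al be A B t n p)"

definition hh :: "real \<Rightarrow> real \<Rightarrow> real \<Rightarrow> real \<Rightarrow> real \<Rightarrow> nat \<Rightarrow> real" where
  "hh al be A B t n = ip al be A B t (OP al be A B t n) (OP al be A B t n)"

definition OPm1 :: "real \<Rightarrow> real \<Rightarrow> real \<Rightarrow> real \<Rightarrow> real \<Rightarrow> nat \<Rightarrow> real poly" where
  "OPm1 al be A B t n = (if n = 0 then 0 else OP al be A B t (n - 1))"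

text \<open>Recurrence coefficients: x P_n = P_{n+1} + alpha_n P_n + beta_n P_{n-1}, beta_n = h_n/h_{n-1}.\<close>
definition rbeta :: "real \<Rightarrow> real \<Rightarrow> real \<Rightarrow> real \<Rightarrow> real \<Rightarrow> nat \<Rightarrow> real" where
  "rbeta al be A B t n = hh al be A B t n / hh al be A B t (n - 1)"

definition ralpha :: "real \<Rightarrow> real \<Rightarrow> real \<Rightarrow> real \<Rightarrow> real \<Rightarrow> nat \<Rightarrow> real" where
  "ralpha al be A B t n = (THE a. \<exists>b. [:0, 1:] * OP al be A B t n =
      OP al be A B t (Suc n) + smult a (OP al be A B t n) + smult b (OPm1 al be A B t n))"

definition RR :: "real \<Rightarrow> real \<Rightarrow> real \<Rightarrow> real \<Rightarrow> real \<Rightarrow> nat \<Rightarrow> real" where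
  "RR al be A B t n = B * t powr al * (1 - t) powr be * (poly (OP al be A B t n) t)\<^sup>2
      / hh al be A B t n"

definition rr :: "real \<Rightarrow> real \<Rightarrow> real \<Rightarrow> real \<Rightarrow> real \<Rightarrow> nat \<Rightarrow> real" where
  "rr al be A B t n = (if n = 0 then 0 else
     B * t powr al * (1 - t) powr be * poly (OP al be A B t n) t * poly (OP al be A B t (n - 1)) t
      / hh al be A B t (n - 1))"

definition xx :: "real \<Rightarrow> real \<Rightarrow> real \<Rightarrow> real \<Rightarrow> real \<Rightarrow> nat \<Rightarrow> real" where
  "xx al be A B t n = be / hh al be A B t n *
     (LINT y:{0..1}|lborel. (poly (OP al be A B t n) y)\<^sup>2 / (1 - y) * wt al be A B t y)"

definition yy :: "real \<Rightarrow> real \<Rightarrow> real \<Rightarrow> real \<Rightarrow> real \<Rightarrow> nat \<Rightarrow> real" where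
  "yy al be A B t n = (if n = 0 then 0 else be / hh al be A B t (n - 1) *
     (LINT y:{0..1}|lborel. poly (OP al be A B t n) y * poly (OP al be A B t (n - 1)) y / (1 - y)
        * wt al be A B t y))"

end

theory Submission
  imports Defs
begin


lemma heaviside_meas[measurable]: "heaviside \<in> borel_measurable borel"
  unfolding heaviside_def by measurable

lemma powr_int:
  assumes "be > 0"
  shows "set_integrable lborel {0..1::real} (\<lambda>y. (1-y) powr (be-1))"
proof -
  have d: "((\<lambda>y. -((1-y) powr be / be)) has_vector_derivative (1-y) powr (be-1)) (at y)"
    if "y \<in> {0<..<1}" for y
  proof -
    have "((\<lambda>y. -((1-y) powr be / be)) has_real_derivative -( (be * (1-y) powr (be-1) * (-1)) / be)) (at y)"
      using that by (auto intro!: derivative_eq_intros)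
    then show ?thesis using assms by (simp add: has_real_derivative_iff_has_vector_derivative)
  qed
  have c: "continuous_on {0..1} (\<lambda>y::real. -((1-y) powr be / be))"
    using assms by (intro continuous_intros continuous_on_powr') auto
  have "(\<lambda>y. (1-y) powr (be-1)) integrable_on {0..1::real}"
    using fundamental_theorem_of_calculus_interior[OF _ c d] by auto
  then have "(\<lambda>y. (1-y) powr (be-1)) absolutely_integrable_on {0..1::real}"
    by (rule nonnegative_absolutely_integrable_1) auto
  then show ?thesis
    unfolding set_integrable_def
    by (subst (asm) integrable_completion) auto
qed



locale OPs =
  fixes al be A B t :: real
  assumes al: "al > 0" and be: "be > 0" and A: "A \<ge> 0" and AB: "A + B \<ge> 0"
    and nz: "\<not> (A = 0 \<and> B = 0)" and t0: "0 < t" and t1: "t < 1"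
begin

abbreviation "w \<equiv> wt al be A B t"

lemma poly_meas[measurable]: "poly (p::real poly) \<in> borel_measurable borel"
  by (intro borel_measurable_continuous_onI continuous_intros)

lemma w_meas[measurable]: "w \<in> borel_measurable borel"
  unfolding wt_def by measurable

lemma w_bound: "y \<in> {0..1} \<Longrightarrow> \<bar>w y\<bar> \<le> \<bar>A\<bar> + \<bar>B\<bar>"
proof -
  assume y: "y \<in> {0..1}"
  have a: "0 \<le> y powr al" "y powr al \<le> 1" using y al by (auto intro: powr_le1)
  have b: "0 \<le> (1-y) powr be" "(1-y) powr be \<le> 1" using y be by (auto intro: powr_le1)
  have c: "\<bar>A + B * heaviside (y - t)\<bar> \<le> \<bar>A\<bar> + \<bar>B\<bar>"
    unfolding heaviside_def by auto
  have "\<bar>w y\<bar> = y powr al * (1-y) powr be * \<bar>A + B * heaviside (y - t)\<bar>"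
    unfolding wt_def using a b by (simp add: abs_mult)
  also have "\<dots> \<le> 1 * 1 * (\<bar>A\<bar> + \<bar>B\<bar>)"
    using a b c by (intro mult_mono) auto
  finally show ?thesis by simp
qed

lemma w_nonneg: "y \<in> {0..1} \<Longrightarrow> w y \<ge> 0"
  unfolding wt_def heaviside_def using A AB by auto

lemma w_at1: "w 1 = 0"
  unfolding wt_def using be by simp

lemma poly_bnd: fixes p :: "real poly" shows "\<exists>M\<ge>0. \<forall>y\<in>{0..1}. \<bar>poly p y\<bar> \<le> M"
proof -
  have "compact (poly p ` {0..1::real})"
    by (intro compact_continuous_image continuous_intros) auto
  then obtain M where "M > 0" "\<forall>x\<in>poly p ` {0..1}. norm x \<le> M"
    using compact_imp_bounded bounded_pos by metis
  then show ?thesis by (intro exI[of _ M]) auto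
qed

lemma int1: "set_integrable lborel {0..1} (\<lambda>y. poly p y * w y)"
proof -
  obtain M where M: "M \<ge> 0" "\<forall>y\<in>{0..1}. \<bar>poly p y\<bar> \<le> M" using poly_bnd by blast
  show ?thesis
  proof (rule set_integrable_bound[where f = "\<lambda>_::real. M * (\<bar>A\<bar> + \<bar>B\<bar>)"])
    show "set_integrable lborel {0..1::real} (\<lambda>_. M * (\<bar>A\<bar> + \<bar>B\<bar>))"
      using borel_integrable_atLeastAtMost'[of 0 1 "\<lambda>_. M * (\<bar>A\<bar> + \<bar>B\<bar>)"] by simp
    show "set_borel_measurable lborel {0..1} (\<lambda>y. poly p y * w y)"
      unfolding set_borel_measurable_def by measurable
    show "AE x in lborel. x \<in> {0..1} \<longrightarrow> norm (poly p x * w x) \<le> norm (M * (\<bar>A\<bar> + \<bar>B\<bar>))"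
      using M w_bound by (auto simp: abs_mult intro!: mult_mono)
  qed
qed

lemma powr_div: "y < 1 \<Longrightarrow> (1 - y) powr be / (1 - y) = (1 - y) powr (be - 1)"
  by (simp add: powr_diff)

lemma int2: "set_integrable lborel {0..1} (\<lambda>y. poly p y / (1 - y) * w y)"
proof -
  obtain M where M: "M \<ge> 0" "\<forall>y\<in>{0..1}. \<bar>poly p y\<bar> \<le> M" using poly_bnd by blast
  show ?thesis
  proof (rule set_integrable_bound[where f = "\<lambda>y. (M * (\<bar>A\<bar> + \<bar>B\<bar>)) * (1 - y) powr (be - 1)"])
    show "set_integrable lborel {0..1} (\<lambda>y. (M * (\<bar>A\<bar> + \<bar>B\<bar>)) * (1 - y) powr (be - 1))"
      using powr_int[OF be] by (rule set_integrable_mult_right)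
    show "set_borel_measurable lborel {0..1} (\<lambda>y. poly p y / (1 - y) * w y)"
      unfolding set_borel_measurable_def by measurable
    show "AE x in lborel. x \<in> {0..1} \<longrightarrow> norm (poly p x / (1 - x) * w x) \<le>
        norm ((M * (\<bar>A\<bar> + \<bar>B\<bar>)) * (1 - x) powr (be - 1))"
    proof (rule AE_I2, intro impI)
      fix x :: real assume x: "x \<in> {0..1}"
      show "norm (poly p x / (1 - x) * w x) \<le> norm ((M * (\<bar>A\<bar> + \<bar>B\<bar>)) * (1 - x) powr (be - 1))"
      proof (cases "x = 1")
        case True then show ?thesis by simp
      next
        case False
        then have x1: "x < 1" using x by auto
        have h: "\<bar>A + B * heaviside (x - t)\<bar> \<le> \<bar>A\<bar> + \<bar>B\<bar>"
          unfolding heaviside_def by auto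
        have xa: "0 \<le> x powr al" "x powr al \<le> 1" using x al by (auto intro: powr_le1)
        have "poly p x / (1 - x) * w x = poly p x * x powr al * ((1-x) powr be / (1 - x)) * (A + B * heaviside (x - t))"
          unfolding wt_def by simp
        also have "\<dots> = poly p x * x powr al * (1-x) powr (be - 1) * (A + B * heaviside (x - t))"
          using powr_div[OF x1] by simp
        finally have e: "poly p x / (1 - x) * w x = \<dots>" .
        have "\<bar>poly p x * x powr al * (1-x) powr (be - 1) * (A + B * heaviside (x - t))\<bar>
           = \<bar>poly p x\<bar> * x powr al * (1-x) powr (be - 1) * \<bar>A + B * heaviside (x - t)\<bar>"
          using xa by (simp add: abs_mult)
        also have "\<dots> \<le> M * 1 * (1-x) powr (be - 1) * (\<bar>A\<bar> + \<bar>B\<bar>)"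
          using M x xa h by (intro mult_mono) auto
        finally show ?thesis using e M by (simp add: abs_mult mult_ac)
      qed
    qed
  qed
qed

end


context OPs begin

abbreviation "ipp \<equiv> ip al be A B t"

lemma int1': "set_integrable lborel {0..1} (\<lambda>y. poly p y * poly q y * w y)"
  using int1[of "p*q"] by (simp add: mult_ac)

lemma ip_comm: "ipp p q = ipp q p"
  unfolding ip_def by (simp add: mult_ac)

lemma ip_add: "ipp (p + q) r = ipp p r + ipp q r"
proof -
  have "ipp (p + q) r = (LINT y:{0..1}|lborel. poly p y * poly r y * w y + poly q y * poly r y * w y)"
    unfolding ip_def by (simp add: algebra_simps)
  also have "\<dots> = ipp p r + ipp q r"
    unfolding ip_def by (rule set_integral_add(2)[OF int1' int1'])
  finally show ?thesis .
qed

lemma ip_smult: "ipp (smult c p) q = c * ipp p q"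
proof -
  have "ipp (smult c p) q = (LINT y:{0..1}|lborel. c * (poly p y * poly q y * w y))"
    unfolding ip_def by (simp add: algebra_simps)
  then show ?thesis unfolding ip_def by simp
qed

lemma ip_zero[simp]: "ipp 0 q = 0"
  unfolding ip_def by simp

lemma ip_uminus: "ipp (- p) q = - ipp p q"
  using ip_smult[of "-1" p q] by simp

lemma ip_diff: "ipp (p - q) r = ipp p r - ipp q r"
  using ip_add[of p "-q" r] ip_uminus[of q r] by simp

lemma ip_add2: "ipp r (p + q) = ipp r p + ipp r q"
  using ip_add ip_comm by metis

lemma ip_smult2: "ipp q (smult c p) = c * ipp q p"
  using ip_smult ip_comm by metis

lemma ip_diff2: "ipp r (p - q) = ipp r p - ipp r q"
  using ip_diff ip_comm by metis

lemma ip_sum: "ipp (\<Sum>k\<in>S. f k) q = (\<Sum>k\<in>S. ipp (f k) q)"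
  by (induction S rule: infinite_finite_induct) (auto simp: ip_add)

lemma ip_x: "ipp ([:0,1:] * p) q = ipp p ([:0,1:] * q)"
  unfolding ip_def by (simp add: mult_ac)

lemma ip_nonneg: "ipp p p \<ge> 0"
  unfolding ip_def set_lebesgue_integral_def
  by (intro integral_nonneg_AE AE_I2) (auto simp: indicator_def w_nonneg)

lemma good_interval: "\<exists>c d. c < d \<and> {c<..<d} \<subseteq> {0..1} \<and> (\<forall>y\<in>{c<..<d}. w y > 0)"
proof (cases "A > 0")
  case True
  show ?thesis
  proof (intro exI conjI)
    show "0 < t" by (rule t0)
    show "{0<..<t} \<subseteq> {0..1}" using t1 by auto
    show "\<forall>y\<in>{0<..<t}. w y > 0"
      using True t1 unfolding wt_def heaviside_def by auto
  qed
next
  case False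
  then have "A = 0" "B > 0" using A AB nz by auto
  show ?thesis
  proof (intro exI conjI)
    show "t < 1" by (rule t1)
    show "{t<..<1} \<subseteq> {0..1}" using t0 by auto
    show "\<forall>y\<in>{t<..<1}. w y > 0"
      using \<open>A = 0\<close> \<open>B > 0\<close> t0 unfolding wt_def heaviside_def by auto
  qed
qed

lemma ip_pos: assumes "p \<noteq> 0" shows "ipp p p > 0"
proof (rule ccontr)
  assume "\<not> ipp p p > 0"
  then have z: "ipp p p = 0" using ip_nonneg[of p] by linarith
  have int: "integrable lborel (\<lambda>y. indicator {0..1} y *\<^sub>R (poly p y * poly p y * w y))"
    using int1'[of p p] unfolding set_integrable_def .
  have "AE y in lborel. indicator {0..1} y *\<^sub>R (poly p y * poly p y * w y) = 0"
    using z unfolding ip_def set_lebesgue_integral_def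
    by (subst (asm) integral_nonneg_eq_0_iff_AE[OF int]) (auto simp: indicator_def w_nonneg)
  obtain c d where cd: "c < d" "{c<..<d} \<subseteq> {0..1}" "\<forall>y\<in>{c<..<d}. w y > 0"
    using good_interval by blast
  have fin: "finite {x. poly p x = 0}" using poly_roots_finite[OF assms] .
  have "AE y in lborel. y \<notin> {x. poly p x = 0}"
    by (rule AE_not_in[OF finite_imp_null_set_lborel[OF fin]])
  with \<open>AE y in lborel. indicator {0..1} y *\<^sub>R (poly p y * poly p y * w y) = 0\<close>
  have "AE y in lborel. y \<notin> {c<..<d}"
  proof eventually_elim
    case (elim y)
    show ?case
    proof
      assume y: "y \<in> {c<..<d}"
      then have "y \<in> {0..1}" "w y > 0" using cd by auto
      with elim show False by (auto simp: indicator_def)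
    qed
  qed
  then have "{c<..<d} \<in> null_sets lborel" by (subst AE_iff_null_sets) auto
  then show False using cd(1) by (simp add: null_sets_def)
qed

end


lemma coeff_zero_deg: "(\<forall>k\<ge>n. coeff q k = 0) \<Longrightarrow> q = 0 \<or> degree q < n"
  by (metis leading_coeff_0_iff not_le)

context OPs begin

abbreviation "mop \<equiv> is_mop al be A B t"

lemma mop_ne0: "mop n p \<Longrightarrow> p \<noteq> 0"
  unfolding is_mop_def by auto

lemma orth_span:
  assumes "\<forall>k<n. mop k (P k)" "\<forall>k<n. ipp p (P k) = 0" "q = 0 \<or> degree q < n"
  shows "ipp p q = 0"
  using assms
proof (induction n arbitrary: q)
  case 0
  then show ?case by (simp add: ip_comm)
next
  case (Suc m)
  define q' where "q' = q - smult (coeff q m) (P m)"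
  have Pm: "degree (P m) = m" "coeff (P m) m = 1" using Suc.prems(1) unfolding is_mop_def by auto
  have dq: "degree q \<le> m" using Suc.prems(3) by auto
  have "\<forall>k\<ge>m. coeff q' k = 0"
  proof (intro allI impI)
    fix k assume "m \<le> k"
    show "coeff q' k = 0"
    proof (cases "k = m")
      case True then show ?thesis using Pm unfolding q'_def by simp
    next
      case False
      then have "k > m" using \<open>m \<le> k\<close> by simp
      then show ?thesis unfolding q'_def using Pm dq by (simp add: coeff_eq_0)
    qed
  qed
  then have "q' = 0 \<or> degree q' < m" by (rule coeff_zero_deg)
  then have "ipp p q' = 0" using Suc.IH[of q'] Suc.prems by auto
  moreover have "q = q' + smult (coeff q m) (P m)" unfolding q'_def by simp
  moreover have "ipp p q = ipp p q' + coeff q m * ipp p (P m)"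
    using arg_cong[OF \<open>q = q' + smult (coeff q m) (P m)\<close>, of "ipp p"]
    by (simp only: ip_add2 ip_smult2)
  ultimately show ?case using Suc.prems(2) by simp
qed

lemma mop_unique: assumes "mop n p1" "mop n p2" shows "p1 = p2"
proof (rule ccontr)
  assume ne: "p1 \<noteq> p2"
  define d where "d = p1 - p2"
  have "\<forall>k\<ge>n. coeff d k = 0"
    using assms unfolding is_mop_def d_def
    by (metis coeff_diff coeff_eq_0 diff_self le_neq_implies_less)
  then have "d = 0 \<or> degree d < n" by (rule coeff_zero_deg)
  then have "degree d < n" using ne unfolding d_def by auto
  then have "ipp p1 d = 0" "ipp p2 d = 0" using assms unfolding is_mop_def by auto
  then have "ipp d d = 0" unfolding d_def by (simp add: ip_diff)
  moreover have "d \<noteq> 0" using ne unfolding d_def by auto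
  ultimately show False using ip_pos by fastforce
qed

lemma mop_exists: "\<exists>p. mop n p"
proof (induction n rule: less_induct)
  case (less n)
  define P where "P = OP al be A B t"
  have mP: "mop k (P k)" if "k < n" for k
  proof -
    have "\<exists>!p. mop k p" using less[OF that] mop_unique by blast
    then show ?thesis unfolding P_def OP_def by (rule theI')
  qed
  have hpos: "ipp (P k) (P k) > 0" if "k < n" for k
    using ip_pos mop_ne0 mP that by blast
  have orthPP: "ipp (P k) (P j) = 0" if "k < n" "j < n" "k \<noteq> j" for k j
  proof (cases "k < j")
    case True
    then have "ipp (P j) (P k) = 0" using mP[OF that(2)] mP[OF that(1)] unfolding is_mop_def by auto
    then show ?thesis by (simp add: ip_comm)
  next
    case False
    then have "j < k" using that by auto
    then show ?thesis using mP[OF that(2)] mP[OF that(1)] unfolding is_mop_def by auto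
  qed
  define c where "c k = ipp (monom 1 n) (P k) / ipp (P k) (P k)" for k
  define p where "p = monom 1 n - (\<Sum>k<n. smult (c k) (P k))"
  have cs: "coeff (\<Sum>k<n. smult (c k) (P k)) i = 0" if "i \<ge> n" for i
    unfolding coeff_sum using mP that unfolding is_mop_def
    by (auto intro!: sum.neutral simp: coeff_eq_0)
  have deg: "degree p = n"
  proof (rule antisym)
    show "degree p \<le> n"
      by (rule degree_le) (auto simp: p_def cs coeff_monom)
    show "n \<le> degree p"
      by (rule le_degree) (simp add: p_def cs)
  qed
  have lc: "lead_coeff p = 1" using deg by (simp add: p_def cs)
  have orth: "ipp p (P j) = 0" if "j < n" for j
  proof -
    have "(\<Sum>k<n. ipp (smult (c k) (P k)) (P j)) = (\<Sum>k<n. if k = j then c j * ipp (P j) (P j) else 0)"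
      by (rule sum.cong) (auto simp: ip_smult orthPP that)
    also have "\<dots> = c j * ipp (P j) (P j)" using that by simp
    also have "\<dots> = ipp (monom 1 n) (P j)" unfolding c_def using hpos[OF that] by simp
    finally show ?thesis unfolding p_def by (simp add: ip_diff ip_sum)
  qed
  have "\<forall>q. degree q < n \<longrightarrow> ipp p q = 0"
    using orth_span[of n P p] mP orth by auto
  then show ?case using deg lc unfolding is_mop_def by blast
qed

lemma OP_mop: "mop n (OP al be A B t n)"
proof -
  have "\<exists>!p. mop n p" using mop_exists mop_unique by blast
  then show ?thesis unfolding OP_def by (rule theI')
qed

end


lemma x_mult: "[:0,1:] * (p::real poly) = pCons 0 p"
  by (simp add: mult_pCons_left)

lemma coeff_pCons0: "coeff (pCons 0 (p::real poly)) k = (if k = 0 then 0 else coeff p (k - 1))"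
  by (cases k) simp_all

lemma coeff_x_mult: "coeff ([:0,1:] * (p::real poly)) k = (if k = 0 then 0 else coeff p (k - 1))"
  by (simp add: x_mult coeff_pCons0)

context OPs begin

abbreviation "P \<equiv> OP al be A B t"
abbreviation "h \<equiv> hh al be A B t"

lemma h_def': "h n = ipp (P n) (P n)" unfolding hh_def ..

lemma h_pos: "h n > 0"
  unfolding h_def' using ip_pos mop_ne0 OP_mop by blast

lemma degP: "degree (P n) = n" and lcP: "coeff (P n) n = 1"
  using OP_mop[of n] unfolding is_mop_def by auto

lemma coeffP_hi: "k > n \<Longrightarrow> coeff (P n) k = 0"
  using degP coeff_eq_0 by metis

lemma orthP: "degree q < n \<Longrightarrow> ipp (P n) q = 0"
  using OP_mop[of n] unfolding is_mop_def by auto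

lemma orthP0: "q = 0 \<or> degree q < n \<Longrightarrow> ipp (P n) q = 0"
  using orthP by (auto simp: ip_comm)

lemma orthPP: "i \<noteq> j \<Longrightarrow> ipp (P i) (P j) = 0"
  by (metis degP ip_comm linorder_neqE_nat orthP)

lemma xP_shift: "ipp (P n) ([:0,1:] * P (n - 1)) = h n" if "n \<ge> 1"
proof -
  define r where "r = [:0,1:] * P (n - 1) - P n"
  have "\<forall>k\<ge>n. coeff r k = 0"
  proof (intro allI impI)
    fix k assume "n \<le> k"
    then show "coeff r k = 0" unfolding r_def using that
      by (cases "k = n") (auto simp: coeff_x_mult coeff_pCons0 lcP coeffP_hi)
  qed
  then have "ipp (P n) r = 0" by (intro orthP0 coeff_zero_deg)
  moreover have "[:0,1:] * P (n - 1) = P n + r" unfolding r_def by simp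
  ultimately show ?thesis by (simp add: ip_add2 h_def')
qed

lemma rec0:
  assumes n: "n \<ge> 1"
  shows "[:0,1:] * P n = P (Suc n) + smult (ipp ([:0,1:] * P n) (P n) / h n) (P n)
           + smult (h n / h (n - 1)) (P (n - 1))"
proof -
  define a where "a = ipp ([:0,1:] * P n) (P n) / h n"
  define b where "b = h n / h (n - 1)"
  define d where "d = [:0,1:] * P n - (P (Suc n) + smult a (P n) + smult b (P (n - 1)))"
  have "\<forall>k\<ge>Suc n. coeff d k = 0"
  proof (intro allI impI)
    fix k assume "Suc n \<le> k"
    then show "coeff d k = 0" unfolding d_def using n
      by (cases "k = Suc n") (auto simp: coeff_x_mult coeff_pCons0 lcP coeffP_hi)
  qed
  then have dd: "d = 0 \<or> degree d < Suc n" by (rule coeff_zero_deg)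
  have o: "ipp d (P k) = 0" if k: "k < Suc n" for k
  proof -
    have hp: "h n > 0" "h (n - 1) > 0" using h_pos by auto
    consider "k = n" | "k = n - 1" | "k < n - 1" using k by arith
    then show ?thesis
    proof cases
      case 1
      then show ?thesis using hp n unfolding d_def a_def
        by (simp add: ip_diff ip_add ip_smult orthPP h_def')
    next
      case 2
      have "ipp ([:0,1:] * P n) (P (n - 1)) = h n"
        using xP_shift[OF n] ip_x ip_comm by metis
      then show ?thesis using hp n 2 unfolding d_def b_def
        by (simp add: ip_diff ip_add ip_smult orthPP h_def')
    next
      case 3
      have "ipp ([:0,1:] * P n) (P k) = 0"
        unfolding ip_x using 3 n
        by (intro orthP) (auto simp: x_mult degP)
      then show ?thesis using 3 n unfolding d_def
        by (simp add: ip_diff ip_add ip_smult orthPP)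
    qed
  qed
  have "ipp d d = 0"
    by (rule orth_span[of "Suc n" P d d]) (use OP_mop o dd in auto)
  then have "d = 0" using ip_pos by fastforce
  then show ?thesis unfolding d_def a_def b_def by simp
qed

lemma rec:
  assumes n: "n \<ge> 1"
  shows "[:0,1:] * P n = P (Suc n) + smult (ralpha al be A B t n) (P n)
           + smult (rbeta al be A B t n) (P (n - 1))"
proof -
  define a where "a = ipp ([:0,1:] * P n) (P n) / h n"
  have e: "[:0,1:] * P n = P (Suc n) + smult a (P n) + smult (h n / h (n - 1)) (OPm1 al be A B t n)"
    using rec0[OF n] n unfolding a_def OPm1_def by simp
  have "ralpha al be A B t n = a"
    unfolding ralpha_def
  proof (rule the_equality)
    show "\<exists>b. [:0, 1:] * P n = P (Suc n) + smult a (P n) + smult b (OPm1 al be A B t n)"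
      using e by blast
    fix a' assume "\<exists>b. [:0, 1:] * P n = P (Suc n) + smult a' (P n) + smult b (OPm1 al be A B t n)"
    then obtain b where e2: "[:0, 1:] * P n = P (Suc n) + smult a' (P n) + smult b (OPm1 al be A B t n)" by blast
    have "coeff ([:0, 1:] * P n) n = coeff (P (Suc n)) n + a'"
      using arg_cong[OF e2, of "\<lambda>p. coeff p n"] n unfolding OPm1_def by (simp add: lcP coeffP_hi)
    moreover have "coeff ([:0, 1:] * P n) n = coeff (P (Suc n)) n + a"
      using arg_cong[OF e, of "\<lambda>p. coeff p n"] n unfolding OPm1_def by (simp add: lcP coeffP_hi)
    ultimately show "a' = a" by simp
  qed
  then show ?thesis using rec0[OF n] unfolding a_def rbeta_def by simp
qed

lemma p1_rel:
  assumes n: "n \<ge> 1"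
  shows "coeff (P n) (n - 1) = coeff (P (Suc n)) n + ralpha al be A B t n"
  using arg_cong[OF rec[OF n], of "\<lambda>p. coeff p n"] n by (simp add: coeff_x_mult coeff_pCons0 lcP coeffP_hi)

end


context OPs begin

definition "Iw p = ipp p 1"
definition "Jw p = (LINT y:{0..1}|lborel. poly p y / (1 - y) * w y)"

lemma u_deriv:
  fixes g :: "real poly"
  assumes y: "0 < y" "y < 1"
  shows "((\<lambda>y. y powr (al + 1) * (1 - y) powr be * poly g y) has_real_derivative
     (poly (smult (1 + al + be) g + [:0,1:] * pderiv g) y * y powr al * (1 - y) powr be
       - be * (poly g y / (1 - y) * (y powr al * (1 - y) powr be)))) (at y)"
proof -
  have "((\<lambda>y. y powr (al + 1) * (1 - y) powr be * poly g y) has_real_derivative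
     ((al + 1) * y powr (al + 1 - 1) * 1 * (1 - y) powr be + y powr (al + 1) * (be * (1 - y) powr (be - 1) * (0 - 1))) * poly g y
      + y powr (al + 1) * (1 - y) powr be * poly (pderiv g) y) (at y)"
    using y by (auto intro!: derivative_eq_intros)
  moreover have "((al + 1) * y powr (al + 1 - 1) * 1 * (1 - y) powr be + y powr (al + 1) * (be * (1 - y) powr (be - 1) * (0 - 1))) * poly g y
      + y powr (al + 1) * (1 - y) powr be * poly (pderiv g) y
     = poly (smult (1 + al + be) g + [:0,1:] * pderiv g) y * y powr al * (1 - y) powr be
       - be * (poly g y / (1 - y) * (y powr al * (1 - y) powr be))"
  proof -
    have e1: "y powr (al + 1) = y * y powr al" using y by (simp add: powr_add)
    have e2: "(1 - y) powr (be - 1) = (1 - y) powr be / (1 - y)" using y by (simp add: powr_diff)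
    have ne: "1 - y \<noteq> 0" using y by simp
    show ?thesis unfolding e1 e2 using ne by (simp add: field_simps)
  qed
  ultimately show ?thesis by simp
qed

lemma Iw_add: "Iw (p + q) = Iw p + Iw q" unfolding Iw_def by (rule ip_add)
lemma Iw_smult: "Iw (smult c p) = c * Iw p" unfolding Iw_def by (rule ip_smult)

lemma ibp:
  fixes g :: "real poly"
  shows "be * Jw g = (1 + al + be) * Iw g + Iw ([:0,1:] * pderiv g)
           + B * t powr al * (1 - t) powr be * t * poly g t"
proof -
  define G where "G = smult (1 + al + be) g + [:0,1:] * pderiv g"
  define u where "u y = y powr (al + 1) * (1 - y) powr be * poly g y" for y :: real
  define F where "F y = poly G y * y powr al * (1 - y) powr be
       - be * (poly g y / (1 - y) * (y powr al * (1 - y) powr be))" for y :: real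
  define K where "K y = A + B * heaviside (y - t)" for y
  have der: "(u has_vector_derivative F y) (at y)" if "y \<in> {0<..<1}" for y
    using u_deriv[of y g] that unfolding u_def F_def G_def
    by (simp add: has_real_derivative_iff_has_vector_derivative)
  have cont: "continuous_on {a..b} u" if "0 \<le> a" "b \<le> 1" for a b
    unfolding u_def using that al be
    by (intro continuous_intros continuous_on_powr') auto
  have u0: "u 0 = 0" and u1: "u 1 = 0" unfolding u_def using al be by auto
  have i1: "(F has_integral (u t - u 0)) {0..t}"
    by (rule fundamental_theorem_of_calculus_interior[OF _ cont]) (use t0 t1 der in auto)
  have i2: "(F has_integral (u 1 - u t)) {t..1}"
    by (rule fundamental_theorem_of_calculus_interior[OF _ cont]) (use t0 t1 der in auto)
  have j1: "((\<lambda>y. F y * K y) has_integral (u t * A)) {0..t}"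
  proof (rule has_integral_spike_finite[of "{t}"])
    show "((\<lambda>y. F y * A) has_integral (u t * A)) {0..t}"
      using has_integral_mult_left[OF i1, of A] u0 by simp
    show "\<And>x. x \<in> {0..t} - {t} \<Longrightarrow> F x * K x = F x * A"
      unfolding K_def heaviside_def by auto
  qed simp
  have j2: "((\<lambda>y. F y * K y) has_integral (- u t * (A + B))) {t..1}"
  proof -
    have "((\<lambda>y. F y * (A + B)) has_integral (- u t * (A + B))) {t..1}"
      using has_integral_mult_left[OF i2, of "A + B"] u1 by simp
    then show ?thesis
      by (intro has_integral_spike_finite[of "{}" "{t..1}" "\<lambda>y. F y * K y" "\<lambda>y. F y * (A + B)"])
        (auto simp: K_def heaviside_def)
  qed
  have j: "((\<lambda>y. F y * K y) has_integral (- B * u t)) {0..1}"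
    using has_integral_combine[OF _ _ j1 j2] t0 t1 by (simp add: algebra_simps)
  have FK: "F y * K y = poly G y * w y - be * (poly g y / (1 - y) * w y)" for y
    unfolding F_def K_def wt_def by (simp add: algebra_simps add_divide_distrib)
  have s1: "set_integrable lborel {0..1} (\<lambda>y. poly G y * w y)" by (rule int1)
  have s2: "set_integrable lborel {0..1} (\<lambda>y. poly g y / (1 - y) * w y)" by (rule int2)
  have "((\<lambda>y. poly G y * w y - be * (poly g y / (1 - y) * w y)) has_integral
          (Iw G - be * Jw g)) {0..1}"
  proof (rule has_integral_diff)
    show "((\<lambda>y. poly G y * w y) has_integral Iw G) {0..1}"
      using set_borel_integral_eq_integral[OF s1] unfolding Iw_def ip_def
      by (simp add: integrable_integral)
    show "((\<lambda>y. be * (poly g y / (1 - y) * w y)) has_integral be * Jw g) {0..1}"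
      using set_borel_integral_eq_integral[OF s2] unfolding Jw_def
      by (intro has_integral_mult_right) (simp add: integrable_integral)
  qed
  then have "Iw G - be * Jw g = - B * u t"
    using j FK by (simp add: has_integral_unique)
  moreover have "Iw G = (1 + al + be) * Iw g + Iw ([:0,1:] * pderiv g)"
    unfolding G_def by (simp add: Iw_add Iw_smult)
  moreover have "u t = t * t powr al * (1 - t) powr be * poly g t"
    unfolding u_def using t0 by (simp add: powr_add)
  ultimately show ?thesis by (simp add: algebra_simps)
qed

end


lemma coeff_xpd: "coeff ([:0,1:] * pderiv (q::real poly)) k = of_nat k * coeff q k"
  by (cases k) (simp_all add: coeff_x_mult coeff_pderiv)

lemma coeff_pCons_pderiv[simp]: "coeff (pCons 0 (pderiv (q::real poly))) k = of_nat k * coeff q k"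
  by (cases k) (simp_all add: coeff_pderiv)

context OPs begin

lemma Iw_mult: "Iw (p * q) = ipp p q"
  unfolding Iw_def ip_def by (simp add: mult_ac)

lemma Jw_add: "Jw (p + q) = Jw p + Jw q"
proof -
  have "Jw (p + q) = (LINT y:{0..1}|lborel. poly p y / (1 - y) * w y + poly q y / (1 - y) * w y)"
    unfolding Jw_def by (simp add: algebra_simps add_divide_distrib)
  also have "\<dots> = Jw p + Jw q"
    unfolding Jw_def by (rule set_integral_add(2)[OF int2 int2])
  finally show ?thesis .
qed

lemma Jw_smult: "Jw (smult c p) = c * Jw p"
proof -
  have e: "(\<lambda>y. poly (smult c p) y / (1 - y) * w y) = (\<lambda>y. c * (poly p y / (1 - y) * w y))"
    by (rule ext) simp
  show ?thesis unfolding Jw_def e by (rule set_integral_mult_right)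
qed

lemma Jw_diff: "Jw (p - q) = Jw p - Jw q"
  using Jw_add[of p "-q"] Jw_smult[of "-1" q] by simp

lemma Jw_1x: "Jw ([:1,-1:] * p) = Iw p"
proof -
  have "Jw ([:1,-1:] * p) = (LINT y:{0..1}|lborel. poly p y * poly 1 y * w y)"
    unfolding Jw_def
  proof (rule set_lebesgue_integral_cong)
    show "\<forall>x. x \<in> {0..1} \<longrightarrow> poly ([:1, -1:] * p) x / (1 - x) * w x = poly p x * poly 1 x * w x"
    proof (intro allI impI)
      fix x :: real assume "x \<in> {0..1}"
      show "poly ([:1, -1:] * p) x / (1 - x) * w x = poly p x * poly 1 x * w x"
      proof (cases "x = 1")
        case True then show ?thesis by (simp add: w_at1)
      next
        case False
        then have "1 - x \<noteq> 0" by simp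
        then show ?thesis by (simp add: field_simps)
      qed
    qed
  qed simp
  then show ?thesis unfolding Iw_def ip_def .
qed

lemma Pt_rec: assumes n: "n \<ge> 1" shows "t * poly (P n) t = poly (P (Suc n)) t + ralpha al be A B t n * poly (P n) t
   + rbeta al be A B t n * poly (P (n - 1)) t"
  using arg_cong[OF rec[OF n], of "\<lambda>p. poly p t"] by simp

lemma xpd_P: "m \<ge> 1 \<Longrightarrow> ipp ([:0,1:] * pderiv (P m)) (P (m - 1)) = - coeff (P m) (m - 1) * h (m - 1)"
proof -
  assume m: "m \<ge> 1"
  define p1 where "p1 = coeff (P m) (m - 1)"
  define D where "D = [:0,1:] * pderiv (P m) - smult (of_nat m) (P m) + smult p1 (P (m - 1))"
  have "\<forall>k\<ge>m - 1. coeff D k = 0"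
  proof (intro allI impI)
    fix k assume k: "m - 1 \<le> k"
    consider "k = m - 1" | "k = m" | "k > m" using k by arith
    then show "coeff D k = 0"
    proof cases
      case 1 then show ?thesis using m unfolding D_def p1_def
        by (simp add: lcP coeffP_hi algebra_simps of_nat_diff)
    next
      case 2 then show ?thesis using m unfolding D_def p1_def
        by (simp add: coeff_xpd lcP coeffP_hi)
    next
      case 3 then show ?thesis using m unfolding D_def p1_def
        by (simp add: coeff_xpd lcP coeffP_hi)
    qed
  qed
  then have "ipp (P (m - 1)) D = 0" by (intro orthP0 coeff_zero_deg)
  then have "ipp D (P (m - 1)) = 0" by (simp add: ip_comm)
  then show ?thesis using m unfolding D_def p1_def
    by (simp add: ip_add ip_diff ip_smult orthPP h_def')
qed

lemma xpd_P2: "m \<ge> 1 \<Longrightarrow> ipp (P m) ([:0,1:] * pderiv (P (m - 1))) = 0"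
proof -
  assume m: "m \<ge> 1"
  have "\<forall>k\<ge>m. coeff ([:0,1:] * pderiv (P (m - 1))) k = 0"
    using m by (auto simp: coeff_xpd coeffP_hi)
  then show ?thesis by (intro orthP0 coeff_zero_deg)
qed

lemma yy_rel: "m \<ge> 1 \<Longrightarrow> yy al be A B t m = t * rr al be A B t m - coeff (P m) (m - 1)"
proof -
  assume m: "m \<ge> 1"
  define g where "g = P m * P (m - 1)"
  have I0: "Iw g = 0" unfolding g_def Iw_mult using orthPP m by simp
  have I1: "Iw ([:0,1:] * pderiv g) = - coeff (P m) (m - 1) * h (m - 1)"
  proof -
    have "[:0,1:] * pderiv g = ([:0,1:] * pderiv (P m)) * P (m - 1) + P m * ([:0,1:] * pderiv (P (m - 1)))"
      unfolding g_def by (simp add: pderiv_mult algebra_simps)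
    then show ?thesis using xpd_P[OF m] xpd_P2[OF m] by (simp only: Iw_add Iw_mult)
  qed
  have e: "be * Jw g = - coeff (P m) (m - 1) * h (m - 1) + B * t powr al * (1 - t) powr be * t * (poly (P m) t * poly (P (m - 1)) t)"
    using ibp[of g] I0 I1 unfolding g_def by simp
  have yyJ: "yy al be A B t m = be / h (m - 1) * Jw g"
    unfolding yy_def Jw_def g_def using m by (simp add: mult_ac)
  have hp: "h (m - 1) > 0" by (rule h_pos)
  show ?thesis unfolding yyJ rr_def using m e hp
    by (simp add: field_simps)
qed

end


lemma alg1:
  fixes a b d c t al h0 h1 h2 :: real
  assumes "h0 > 0" "h1 > 0" "h2 > 0" and r: "t * b = d + al * b + h1 / h0 * a"
  shows "(t - al) * (c * d * b / h1 - c * b * a / h0) = h2 / h1 * (c * d\<^sup>2 / h2) - h1 / h0 * (c * a\<^sup>2 / h0)"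
proof -
  have d: "d = t * b - al * b - h1 / h0 * a" using r by simp
  show ?thesis unfolding d using assms(1-3) by (simp add: field_simps power2_eq_square)
qed

context OPs begin

lemma id1: assumes n: "n \<ge> 1"
  shows "(t - ralpha al be A B t n) * (rr al be A B t (n + 1) - rr al be A B t n)
           = rbeta al be A B t (n + 1) * RR al be A B t (n + 1) - rbeta al be A B t n * RR al be A B t (n - 1)"
proof -
  have r: "t * poly (P n) t = poly (P (Suc n)) t + ralpha al be A B t n * poly (P n) t + h n / h (n - 1) * poly (P (n - 1)) t"
    using Pt_rec[OF n] unfolding rbeta_def by simp
  show ?thesis
    unfolding rr_def RR_def rbeta_def using n
    using alg1[OF h_pos h_pos h_pos r, of "B * t powr al * (1 - t) powr be"]
    by (simp add: mult_ac)
qed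

lemma id2_key: assumes n: "n \<ge> 1"
  shows "(1 - ralpha al be A B t n) * (h n / h (n - 1) * Jw (P n * P (n - 1)) - Jw (P n * P (Suc n)))
     = (h n / h (n - 1))\<^sup>2 * Jw (P (n - 1) * P (n - 1)) - Jw (P (Suc n) * P (Suc n))"
proof -
  define al' where "al' = ralpha al be A B t n"
  define bt where "bt = h n / h (n - 1)"
  define Q where "Q = smult bt (P (n - 1)) - P (Suc n)"
  have r: "[:0,1:] * P n = P (Suc n) + smult al' (P n) + smult bt (P (n - 1))"
    using rec[OF n] unfolding al'_def bt_def rbeta_def by simp
  have pe: "smult (1 - al') (P n * Q) = [:1,-1:] * (P n * Q) + smult (bt\<^sup>2) (P (n - 1) * P (n - 1)) - P (Suc n) * P (Suc n)"
  proof (rule iffD1[OF poly_eq_poly_eq_iff], rule ext)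
    fix y :: real
    have ry: "y * poly (P n) y = poly (P (Suc n)) y + al' * poly (P n) y + bt * poly (P (n - 1)) y"
      using arg_cong[OF r, of "\<lambda>p. poly p y"] by simp
    show "poly (smult (1 - al') (P n * Q)) y = poly ([:1,-1:] * (P n * Q) + smult (bt\<^sup>2) (P (n - 1) * P (n - 1)) - P (Suc n) * P (Suc n)) y"
      by (simp only: Q_def poly_smult poly_mult poly_diff poly_add poly_pCons poly_0 mult_zero_right add_0_right)
        (use ry in algebra)
  qed
  have PQ: "P n * Q = smult bt (P n * P (n - 1)) - P n * P (Suc n)"
    unfolding Q_def by (simp add: algebra_simps)
  have "Jw (smult (1 - al') (P n * Q)) = (1 - al') * (bt * Jw (P n * P (n - 1)) - Jw (P n * P (Suc n)))"
    unfolding Jw_smult PQ Jw_diff by simp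
  moreover have "Jw ([:1,-1:] * (P n * Q) + smult (bt\<^sup>2) (P (n - 1) * P (n - 1)) - P (Suc n) * P (Suc n))
     = bt\<^sup>2 * Jw (P (n - 1) * P (n - 1)) - Jw (P (Suc n) * P (Suc n))"
  proof -
    have "Jw ([:1,-1:] * (P n * Q)) = 0"
      unfolding Jw_1x Iw_mult Q_def using n by (simp add: ip_diff2 ip_smult2 orthPP)
    then show ?thesis by (simp add: Jw_add Jw_diff Jw_smult)
  qed
  ultimately show ?thesis using pe unfolding al'_def bt_def by simp
qed

lemma alg2:
  fixes aa bb h0 h1 h2 J0 J1 J2 J3 :: real
  assumes "h0 > 0" "h1 > 0" "h2 > 0"
    and K: "(1 - aa) * (h1 / h0 * J1 - J2) = (h1 / h0)\<^sup>2 * J0 - J3"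
  shows "(1 - aa) * (bb / h0 * J1 - bb / h1 * J2) = h1 / h0 * (bb / h0 * J0) - h2 / h1 * (bb / h2 * J3)"
proof -
  have "(1 - aa) * (bb / h0 * J1 - bb / h1 * J2) = bb / h1 * ((1 - aa) * (h1 / h0 * J1 - J2))"
    using assms(1-3) by (simp add: field_simps)
  also have "\<dots> = bb / h1 * ((h1 / h0)\<^sup>2 * J0 - J3)" using K by simp
  also have "\<dots> = h1 / h0 * (bb / h0 * J0) - h2 / h1 * (bb / h2 * J3)"
    using assms(1-3) by (simp add: field_simps power2_eq_square)
  finally show ?thesis .
qed

lemma id2: assumes n: "n \<ge> 1"
  shows "(1 - ralpha al be A B t n) * (yy al be A B t n - yy al be A B t (n + 1))
           = rbeta al be A B t n * xx al be A B t (n - 1) - rbeta al be A B t (n + 1) * xx al be A B t (n + 1)"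
proof -
  have xxJ: "xx al be A B t k = be / h k * Jw (P k * P k)" for k
    unfolding xx_def Jw_def by (simp add: power2_eq_square)
  have yyJ: "yy al be A B t k = be / h (k - 1) * Jw (P k * P (k - 1))" if "k \<ge> 1" for k
    unfolding yy_def Jw_def using that by simp
  have yy1: "yy al be A B t (n + 1) = be / h n * Jw (P n * P (Suc n))"
    using yyJ[of "n+1"] by (simp add: mult.commute)
  show ?thesis
    unfolding yyJ[OF n] yy1 xxJ rbeta_def
    using alg2[OF h_pos h_pos h_pos id2_key[OF n]] by simp
qed

end


lemma alg3:
  fixes a t y0 y1 r0 r1 bx0 bx1 bR0 bR1 :: real
  assumes e1: "(t - a) * (r1 - r0) = bR1 - bR0"
    and e2: "(1 - a) * (y0 - y1) = bx0 - bx1"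
    and e3: "a = (y1 - y0) - t * (r1 - r0)"
  shows "- a * (y1 - y0 + r0 - r1 - 1) = bx1 - bx0 + bR0 - bR1"
  using assms by algebra

theorem mainTheorem6:
  fixes al be A B t :: real and n :: nat
  assumes "al > 0" "be > 0" "A \<ge> 0" "A + B \<ge> 0" "\<not> (A = 0 \<and> B = 0)"
    and "0 < t" "t < 1" "n \<ge> 1"
  shows "((t - ralpha al be A B t n) * (rr al be A B t (n + 1) - rr al be A B t n)
           = rbeta al be A B t (n + 1) * RR al be A B t (n + 1) - rbeta al be A B t n * RR al be A B t (n - 1)) \<and>
         ((1 - ralpha al be A B t n) * (yy al be A B t n - yy al be A B t (n + 1))
           = rbeta al be A B t n * xx al be A B t (n - 1) - rbeta al be A B t (n + 1) * xx al be A B t (n + 1)) \<and>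
         (- ralpha al be A B t n * (yy al be A B t (n + 1) - yy al be A B t n + rr al be A B t n - rr al be A B t (n + 1) - 1)
           = rbeta al be A B t (n + 1) * xx al be A B t (n + 1) - rbeta al be A B t n * xx al be A B t (n - 1)
             + rbeta al be A B t n * RR al be A B t (n - 1) - rbeta al be A B t (n + 1) * RR al be A B t (n + 1))"
proof -
  interpret OPs al be A B t using assms by unfold_locales auto
  have n: "n \<ge> 1" by fact
  note e1 = id1[OF n] and e2 = id2[OF n]
  have e3: "ralpha al be A B t n = (yy al be A B t (n + 1) - yy al be A B t n) - t * (rr al be A B t (n + 1) - rr al be A B t n)"
    using yy_rel[OF n] yy_rel[of "n + 1"] p1_rel[OF n] by (simp add: algebra_simps)
  show ?thesis using e1 e2 alg3[OF e1 e2 e3] by blast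
qed


end
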